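(* Let $\xi\ge 1$ and let $W_K$ be a kernel walk with excess $\xi$, with induced tree $T(W_K)=(V,E)$. Then $|V|\le 3\xi-1$ and the number of simple edges of $T(W_K)$ is at most $2\xi-2$, and these bounds are tight. Consequently $K_\xi(u,v,z)$ is a polynomial of degree $2\xi-2$ in $u$, $3\xi-1$ in $v$ and $4\xi-2$ in $z$.
   Context: A tree walk of size $m$ and length $L$ is a sequence $W=(v_1,\dots,v_L)$ of elements of $[m]$ in which every element of $[m]$ occurs, such that the graph $T(W)$ with vertex set $[m]$ and edges $\{v_j,v_{j+1}\}$ ($1\le j<L$) and $\{v_L,v_1\}$ is a tree; $W$ is the closed walk $v_1\to\dots\to v_L\to v_1$ with root $v_1$; a root of degree 1 is also a leaf. Each edge is traversed $2k$ times ($k\ge1$); its excess is $k-1$; it is simple if $k=1$ and an excess edge if $k\ge2$. The excess of $W$ is the sum of the edge excesses, i.e. half its length minus the number of edges. A kernel walk is a tree walk such that: (i) no non-root leaf is incident to a simple edge; (ii) if the root is a leaf, its edge is an excess edge; (iii) no non-root vertex has degree exactly $2$ with both incident edges simple. $k_{\xi,s,2\ell}$ is the number of kernel walks of length $2\ell$, excess $\xi$, whose induced tree has $s$ simple edges, and \[ K_\xi(u,v,z)=\sum_{s,\ell\ge0}k_{\xi,s,2\ell}\,u^s\frac{v^{\ell-\xi+1}}{(\ell-\xi+1)!}z^\ell . \] *)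

theory Defs
  imports Complex_Main
begin

text \<open>Walks are lists W = [v_1, ..., v_L] of naturals; the vertex set [m] is {1..m}.
  Position j (0-based, j < L) carries the step {W!j, W!((j+1) mod L)}, so the closing
  step {v_L, v_1} is included.\<close>

definition step_edge :: "nat list \<Rightarrow> nat \<Rightarrow> nat set" where
  "step_edge W j = {W ! j, W ! ((j + 1) mod length W)}"

definition walk_edges :: "nat list \<Rightarrow> nat set set" where
  "walk_edges W = {step_edge W j | j. j < length W}"

definition adj :: "nat set set \<Rightarrow> (nat \<times> nat) set" where
  "adj E = {(a, b). {a, b} \<in> E}"

definition is_tree :: "nat set \<Rightarrow> nat set set \<Rightarrow> bool" where
  "is_tree V E \<longleftrightarrow> finite V \<and> V \<noteq> {}
     \<and> (\<forall>e\<in>E. \<exists>a b. a \<in> V \<and> b \<in> V \<and> a \<noteq> b \<and> e = {a, b})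
     \<and> (\<forall>a\<in>V. \<forall>b\<in>V. (a, b) \<in> (adj E)\<^sup>*)
     \<and> card E + 1 = card V"

definition tree_walk :: "nat \<Rightarrow> nat list \<Rightarrow> bool" where
  "tree_walk m W \<longleftrightarrow> W \<noteq> [] \<and> set W = {1..m} \<and> is_tree {1..m} (walk_edges W)"

definition trav :: "nat list \<Rightarrow> nat set \<Rightarrow> nat" where
  "trav W e = card {j. j < length W \<and> step_edge W j = e}"

definition edge_k :: "nat list \<Rightarrow> nat set \<Rightarrow> nat" where
  "edge_k W e = trav W e div 2"

definition simple_edge :: "nat list \<Rightarrow> nat set \<Rightarrow> bool" where
  "simple_edge W e \<longleftrightarrow> edge_k W e = 1"

definition excess_edge :: "nat list \<Rightarrow> nat set \<Rightarrow> bool" where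
  "excess_edge W e \<longleftrightarrow> edge_k W e \<ge> 2"

definition walk_excess :: "nat list \<Rightarrow> nat" where
  "walk_excess W = (\<Sum>e\<in>walk_edges W. edge_k W e - 1)"

definition num_simple :: "nat list \<Rightarrow> nat" where
  "num_simple W = card {e \<in> walk_edges W. simple_edge W e}"

definition vdeg :: "nat list \<Rightarrow> nat \<Rightarrow> nat" where
  "vdeg W v = card {e \<in> walk_edges W. v \<in> e}"

definition kernel_walk :: "nat \<Rightarrow> nat list \<Rightarrow> bool" where
  "kernel_walk m W \<longleftrightarrow> tree_walk m W
     \<and> (\<forall>v\<in>{1..m}. v \<noteq> hd W \<and> vdeg W v = 1 \<longrightarrow>
           (\<forall>e\<in>walk_edges W. v \<in> e \<longrightarrow> \<not> simple_edge W e))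
     \<and> (vdeg W (hd W) = 1 \<longrightarrow> (\<forall>e\<in>walk_edges W. hd W \<in> e \<longrightarrow> excess_edge W e))
     \<and> (\<forall>v\<in>{1..m}. v \<noteq> hd W \<and> vdeg W v = 2 \<longrightarrow>
           \<not> (\<forall>e\<in>walk_edges W. v \<in> e \<longrightarrow> simple_edge W e))"

definition kcount :: "nat \<Rightarrow> nat \<Rightarrow> nat \<Rightarrow> nat" where
  "kcount \<xi> s l = card {W. (\<exists>m. kernel_walk m W) \<and> length W = 2 * l
                          \<and> walk_excess W = \<xi> \<and> num_simple W = s}"

text \<open>Coefficient of u^s v^j z^l in K_xi(u,v,z).\<close>
definition K_coeff :: "nat \<Rightarrow> nat \<Rightarrow> nat \<Rightarrow> nat \<Rightarrow> real" where
  "K_coeff \<xi> s j l = (if j + \<xi> = l + 1 then real (kcount \<xi> s l) / fact j else 0)"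

definition K_support :: "nat \<Rightarrow> (nat \<times> nat \<times> nat) set" where
  "K_support \<xi> = {(s, j, l). K_coeff \<xi> s j l \<noteq> 0}"

end

theory Submission
  imports Defs
begin

lemma walk_edges_img: "walk_edges W = step_edge W ` {..<length W}"
  unfolding walk_edges_def by auto

lemma finite_walk_edges: "finite (walk_edges W)"
  unfolding walk_edges_img by simp

lemma step_edge_in: "j < length W \<Longrightarrow> step_edge W j \<in> walk_edges W"
  unfolding walk_edges_def by auto

lemma cyc_rot_sum:
  fixes h :: "nat \<Rightarrow> nat"
  assumes "L > 0"
  shows "(\<Sum>j<L. h ((j+1) mod L)) = (\<Sum>j<L. h j)"
proof -
  obtain n where L: "L = Suc n" using assms by (cases L) auto
  have "(\<Sum>j<Suc n. h ((j+1) mod Suc n)) = (\<Sum>j<n. h ((j+1) mod Suc n)) + h 0"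
    by (simp add: sum.lessThan_Suc)
  also have "(\<Sum>j<n. h ((j+1) mod Suc n)) = (\<Sum>j<n. h (Suc j))"
    by (rule sum.cong) auto
  also have "(\<Sum>j<n. h (Suc j)) + h 0 = (\<Sum>j<Suc n. h j)"
    by (metis add.commute sum.lessThan_Suc_shift)
  finally show ?thesis using L by simp
qed

lemma card_filter_sum: "card {j. j < (L::nat) \<and> X j} = (\<Sum>j<L. if X j then 1 else (0::nat))"
proof -
  have "{j. j<L \<and> X j} = {j\<in>{..<L}. X j}" by auto
  moreover have "(\<Sum>j<L. if X j then 1 else (0::nat)) = (\<Sum>j\<in>{j\<in>{..<L}. X j}. 1)"
    by (rule sum.inter_filter[symmetric]) simp
  ultimately show ?thesis by simp
qed

lemma cyc_even:
  fixes P :: "nat \<Rightarrow> bool"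
  assumes "L > 0"
  shows "even (card {j. j < L \<and> P j \<noteq> P ((j+1) mod L)})"
proof -
  define Q where "Q j = P ((j+1) mod L)" for j
  define ind :: "bool \<Rightarrow> nat" where "ind b = (if b then 1 else 0)" for b
  have pt: "ind (P j \<noteq> Q j) + 2 * ind (P j \<and> Q j) = ind (P j) + ind (Q j)" for j
    unfolding ind_def by auto
  have c: "card {j. j < L \<and> P j \<noteq> Q j} = (\<Sum>j<L. ind (P j \<noteq> Q j))"
  proof -
    show ?thesis unfolding ind_def by (rule card_filter_sum)
  qed
  have "(\<Sum>j<L. ind (P j \<noteq> Q j)) + 2 * (\<Sum>j<L. ind (P j \<and> Q j))
        = (\<Sum>j<L. ind (P j \<noteq> Q j) + 2 * ind (P j \<and> Q j))"
    by (simp add: sum.distrib sum_distrib_left)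
  also have "\<dots> = (\<Sum>j<L. ind (P j) + ind (Q j))" by (rule sum.cong[OF refl pt])
  also have "\<dots> = (\<Sum>j<L. ind (P j)) + (\<Sum>j<L. ind (Q j))" by (rule sum.distrib)
  also have "(\<Sum>j<L. ind (Q j)) = (\<Sum>j<L. ind (P j))"
    unfolding Q_def using cyc_rot_sum[OF assms, of "\<lambda>j. ind (P j)"] by simp
  finally have "(\<Sum>j<L. ind (P j \<noteq> Q j)) + 2 * (\<Sum>j<L. ind (P j \<and> Q j))
        = 2 * (\<Sum>j<L. ind (P j))" by simp
  then have "even ((\<Sum>j<L. ind (P j \<noteq> Q j)) + 2 * (\<Sum>j<L. ind (P j \<and> Q j)))"
    by (simp only:) simp
  then have "even (\<Sum>j<L. ind (P j \<noteq> Q j))" by simp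
  then show ?thesis using c unfolding Q_def by simp
qed

lemma conn_card:
  assumes fV: "finite V" and fF: "finite F" and aV: "a \<in> V"
    and conn: "\<forall>v\<in>V. (a, v) \<in> (adj F)\<^sup>*"
  shows "card V \<le> card F + 1"
proof -
  define R where "R = adj F"
  define d where "d v = (LEAST n. (a, v) \<in> R ^^ n)" for v
  have ex: "\<exists>u. (a,u) \<in> R\<^sup>* \<and> (u, v) \<in> R \<and> d u < d v" if v: "v \<in> V" "v \<noteq> a" for v
  proof -
    have "\<exists>n. (a, v) \<in> R ^^ n" using conn v rtrancl_power unfolding R_def by blast
    then have dv: "(a, v) \<in> R ^^ d v" unfolding d_def by (rule LeastI_ex)
    have "d v \<noteq> 0"
    proof
      assume "d v = 0" with dv have "(a,v) \<in> R^^0" by simp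
      then show False using v by simp
    qed
    then obtain k where k: "d v = Suc k" by (cases "d v") auto
    then obtain u where u1: "(a,u) \<in> R ^^ k" and u2: "(u, v) \<in> R" using dv by (auto elim: relpow_Suc_E)
    have "d u \<le> k" unfolding d_def using u1 by (rule Least_le)
    moreover have "(a,u) \<in> R\<^sup>*" using u1 rtrancl_power by blast
    ultimately show ?thesis using u2 k by auto
  qed
  define pu where "pu v = (SOME u. (a,u) \<in> R\<^sup>* \<and> (u, v) \<in> R \<and> d u < d v)" for v
  have pu: "(u', v) \<in> R \<and> d u' < d v" if "v \<in> V" "v \<noteq> a" "u' = pu v" for v u'
    using someI_ex[OF ex[OF that(1,2)]] that(3) unfolding pu_def by blast
  define g where "g v = {pu v, v}" for v
  have gF: "g v \<in> F" if "v \<in> V - {a}" for v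
    using pu[of v "pu v"] that unfolding g_def R_def adj_def by auto
  have inj: "inj_on g (V - {a})"
  proof (rule inj_onI)
    fix v w assume v: "v \<in> V - {a}" and w: "w \<in> V - {a}" and e: "g v = g w"
    show "v = w"
    proof (rule ccontr)
      assume "v \<noteq> w"
      then have vw: "v = pu w" "w = pu v" using e unfolding g_def by (auto simp: doubleton_eq_iff)
      have "d v < d w" using pu[of w v] w vw(1) by blast
      moreover have "d w < d v" using pu[of v w] v vw(2) by blast
      ultimately show False by simp
    qed
  qed
  have "card (V - {a}) \<le> card F"
    using card_inj_on_le[OF inj _ fF] gF by auto
  then show ?thesis using aV fV by (simp add: card_Diff_singleton)
qed

lemma tw_edge:
  assumes "tree_walk m W" "e \<in> walk_edges W"
  shows "\<exists>a b. a \<in> {1..m} \<and> b \<in> {1..m} \<and> a \<noteq> b \<and> e = {a, b}"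
  using assms unfolding tree_walk_def is_tree_def by blast

lemma tw_conn:
  assumes "tree_walk m W" "a \<in> {1..m}" "b \<in> {1..m}"
  shows "(a, b) \<in> (adj (walk_edges W))\<^sup>*"
  using assms unfolding tree_walk_def is_tree_def by blast

lemma tw_card: "tree_walk m W \<Longrightarrow> card (walk_edges W) + 1 = m"
  unfolding tree_walk_def is_tree_def by simp

lemma adj_sym: "(x, y) \<in> adj E \<Longrightarrow> (y, x) \<in> adj E"
  unfolding adj_def by (auto simp: insert_commute)

lemma adj_sym_rtrancl: "(x, y) \<in> (adj E)\<^sup>* \<Longrightarrow> (y, x) \<in> (adj E)\<^sup>*"
proof (induction rule: rtrancl_induct)
  case base then show ?case by simp
next
  case (step y z)
  then show ?case using adj_sym by (meson converse_rtrancl_into_rtrancl)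
qed

lemma trav_even:
  assumes tw: "tree_walk m W" and eE: "e \<in> walk_edges W"
  shows "even (trav W e)"
proof -
  let ?E = "walk_edges W"
  let ?L = "length W"
  obtain a b where ab: "a \<in> {1..m}" "b \<in> {1..m}" "a \<noteq> b" "e = {a, b}"
    using tw_edge[OF tw eE] by blast
  define E' where "E' = ?E - {e}"
  have fE: "finite ?E" by (rule finite_walk_edges)
  have nab: "(a, b) \<notin> (adj E')\<^sup>*"
  proof
    assume ab': "(a, b) \<in> (adj E')\<^sup>*"
    have ba': "(b, a) \<in> (adj E')\<^sup>*" using adj_sym_rtrancl[OF ab'] .
    have sub: "adj ?E \<subseteq> (adj E')\<^sup>*"
    proof
      fix p assume p: "p \<in> adj ?E"
      obtain x y where xy: "p = (x, y)" by (cases p)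
      have xyE: "{x, y} \<in> ?E" using p xy unfolding adj_def by auto
      show "p \<in> (adj E')\<^sup>*"
      proof (cases "{x, y} = e")
        case True
        then have "(x = a \<and> y = b) \<or> (x = b \<and> y = a)" using ab(4) by (auto simp: doubleton_eq_iff)
        then show ?thesis using ab' ba' xy by auto
      next
        case False
        then have "(x, y) \<in> adj E'" using xyE unfolding adj_def E'_def by auto
        then show ?thesis using xy by auto
      qed
    qed
    have conn: "\<forall>v\<in>{1..m}. (a, v) \<in> (adj E')\<^sup>*"
      using tw_conn[OF tw ab(1)] rtrancl_subset_rtrancl[OF sub] by blast
    have "card {1..m} \<le> card E' + 1"
      by (rule conn_card[OF _ _ ab(1) conn]) (use fE E'_def in auto)
    moreover have "card E' = card ?E - 1" using eE fE unfolding E'_def by simp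
    moreover have "card ?E + 1 = m" using tw_card[OF tw] .
    moreover have "card ?E \<ge> 1" using eE fE by (metis card_0_eq empty_iff less_one not_le)
    ultimately show False by simp
  qed
  define A where "A = {v. (a, v) \<in> (adj E')\<^sup>*}"
  have aA: "a \<in> A" unfolding A_def by simp
  have bA: "b \<notin> A" unfolding A_def using nab by simp
  have key: "(step_edge W j = e) \<longleftrightarrow> ((W ! j \<in> A) \<noteq> (W ! ((j+1) mod ?L) \<in> A))"
    if j: "j < ?L" for j
  proof -
    define x where "x = W ! j"
    define y where "y = W ! ((j+1) mod ?L)"
    have se: "step_edge W j = {x, y}" unfolding step_edge_def x_def y_def by simp
    show ?thesis
    proof (cases "step_edge W j = e")
      case True
      then have "(x = a \<and> y = b) \<or> (x = b \<and> y = a)" using ab(4) se by (auto simp: doubleton_eq_iff)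
      then show ?thesis using aA bA True x_def y_def by auto
    next
      case False
      have "{x, y} \<in> E'" using False se step_edge_in[OF j] unfolding E'_def by auto
      then have "(x, y) \<in> adj E'" "(y, x) \<in> adj E'" unfolding adj_def by (auto simp: insert_commute)
      then have "(x \<in> A) = (y \<in> A)" unfolding A_def mem_Collect_eq by (meson rtrancl_into_rtrancl)
      then show ?thesis using False x_def y_def by auto
    qed
  qed
  have "trav W e = card {j. j < ?L \<and> (W ! j \<in> A) \<noteq> (W ! ((j+1) mod ?L) \<in> A)}"
    unfolding trav_def using key by metis
  moreover have "?L > 0" using tw unfolding tree_walk_def by simp
  ultimately show ?thesis using cyc_even[of ?L "\<lambda>j. W ! j \<in> A"] by simp
qed

lemma trav_pos:
  assumes "e \<in> walk_edges W" shows "trav W e \<ge> 1"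
proof -
  obtain j where "j < length W" "step_edge W j = e" using assms unfolding walk_edges_def by auto
  then have "j \<in> {j. j < length W \<and> step_edge W j = e}" by simp
  moreover have "finite {j. j < length W \<and> step_edge W j = e}" by simp
  ultimately show ?thesis unfolding trav_def by (metis card_0_eq empty_iff less_one not_le)
qed

lemma edge_k_props:
  assumes "tree_walk m W" "e \<in> walk_edges W"
  shows "2 * edge_k W e = trav W e" "edge_k W e \<ge> 1"
proof -
  have ev: "even (trav W e)" using trav_even[OF assms] .
  have p: "trav W e \<ge> 1" using trav_pos[OF assms(2)] .
  show "2 * edge_k W e = trav W e" unfolding edge_k_def using ev by simp
  then show "edge_k W e \<ge> 1" using p by linarith
qed

lemma length_sum: "length W = (\<Sum>e\<in>walk_edges W. trav W e)"
proof -
  let ?A = "\<lambda>e. {j. j < length W \<and> step_edge W j = e}"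
  have "{..<length W} = (\<Union>e\<in>walk_edges W. ?A e)" unfolding walk_edges_def by auto
  then have "card {..<length W} = card (\<Union>e\<in>walk_edges W. ?A e)" by simp
  also have "\<dots> = (\<Sum>e\<in>walk_edges W. card (?A e))"
    by (rule card_UN_disjoint) (auto simp: finite_walk_edges)
  finally show ?thesis unfolding trav_def by simp
qed

lemma excess_len:
  assumes tw: "tree_walk m W"
  shows "length W = 2 * (walk_excess W + card (walk_edges W))"
proof -
  let ?E = "walk_edges W"
  have "walk_excess W + card ?E = (\<Sum>e\<in>?E. (edge_k W e - 1) + 1)"
    unfolding walk_excess_def by (simp only: sum.distrib) simp
  also have "\<dots> = (\<Sum>e\<in>?E. edge_k W e)"
    by (rule sum.cong) (use edge_k_props(2)[OF tw] in fastforce)+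
  finally have "2 * (walk_excess W + card ?E) = (\<Sum>e\<in>?E. 2 * edge_k W e)"
    by (simp add: sum_distrib_left)
  also have "\<dots> = (\<Sum>e\<in>?E. trav W e)"
    by (rule sum.cong) (use edge_k_props(1)[OF tw] in auto)
  finally show ?thesis using length_sum by simp
qed

lemma deg_sum:
  assumes fV: "finite V" and fF: "finite F" and F2: "\<forall>e\<in>F. e \<subseteq> V \<and> card e = 2"
  shows "(\<Sum>v\<in>V. card {e\<in>F. v \<in> e}) = 2 * card F"
proof -
  have "(\<Sum>v\<in>V. card {e\<in>F. v \<in> e}) = (\<Sum>v\<in>V. \<Sum>e\<in>F. if v \<in> e then 1 else 0)"
  proof (rule sum.cong[OF refl])
    fix v
    have "card {e\<in>F. v \<in> e} = (\<Sum>e\<in>{e\<in>F. v \<in> e}. 1)" by simp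
    also have "\<dots> = (\<Sum>e\<in>F. if v \<in> e then 1 else 0)" by (rule sum.inter_filter[OF fF])
    finally show "card {e\<in>F. v \<in> e} = (\<Sum>e\<in>F. if v \<in> e then 1 else 0)" .
  qed
  also have "\<dots> = (\<Sum>e\<in>F. \<Sum>v\<in>V. if v \<in> e then 1 else 0)" by (rule sum.swap)
  also have "\<dots> = (\<Sum>e\<in>F. 2)"
  proof (rule sum.cong[OF refl])
    fix e assume e: "e \<in> F"
    have "(\<Sum>v\<in>V. if v \<in> e then 1 else 0) = (\<Sum>v\<in>{v\<in>V. v \<in> e}. 1::nat)"
      by (rule sum.inter_filter[OF fV, symmetric])
    also have "{v\<in>V. v \<in> e} = e" using F2 e by auto
    finally show "(\<Sum>v\<in>V. if v \<in> e then 1 else 0) = (2::nat)" using F2 e by simp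
  qed
  finally show ?thesis by simp
qed

lemma card_filter_int:
  assumes "finite A" shows "int (card {x\<in>A. P x}) = (\<Sum>x\<in>A. if P x then 1 else 0)"
  using sum.inter_filter[OF assms, of "\<lambda>_. (1::int)" P] by simp

lemma card_ge1: "finite A \<Longrightarrow> x \<in> A \<Longrightarrow> card A \<ge> 1"
  by (metis card_0_eq empty_iff less_one not_le)

lemma kernel_bound:
  assumes kw: "kernel_walk m W" and xi: "walk_excess W \<ge> 1"
  defines "X \<equiv> {e \<in> walk_edges W. excess_edge W e}"
  shows "m + 1 \<le> 3 * card X \<and> card X \<le> walk_excess W \<and> num_simple W + card X + 1 = m"
proof -
  let ?E = "walk_edges W"
  let ?V = "{1..m}"
  let ?r = "hd W"
  have tw: "tree_walk m W" using kw unfolding kernel_walk_def by simp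
  have fE: "finite ?E" by (rule finite_walk_edges)
  have Wne: "W \<noteq> []" and setW: "set W = ?V" using tw unfolding tree_walk_def by auto
  have kge: "e \<in> ?E \<Longrightarrow> edge_k W e \<ge> 1" for e using edge_k_props(2)[OF tw] by blast
  have se: "e \<in> ?E \<Longrightarrow> simple_edge W e \<or> excess_edge W e" for e
    using kge[of e] unfolding simple_edge_def excess_edge_def by auto
  have nse: "e \<in> ?E \<Longrightarrow> \<not> simple_edge W e \<Longrightarrow> excess_edge W e" for e using se by blast
  define S where "S = {e \<in> ?E. simple_edge W e}"
  have ES: "?E = S \<union> X" unfolding S_def X_def using se by auto
  have SX: "S \<inter> X = {}" unfolding S_def X_def simple_edge_def excess_edge_def by auto
  have cE: "card ?E + 1 = m" by (rule tw_card[OF tw])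
  have fS: "finite S" "finite X" using fE unfolding S_def X_def by auto
  have "card (S \<union> X) = card S + card X" by (rule card_Un_disjoint[OF fS SX])
  then have cSX: "card S + card X = card ?E" using ES by simp
  have ns: "num_simple W = card S" unfolding num_simple_def S_def by simp
  have xle: "card X \<le> walk_excess W"
  proof -
    have "card X = (\<Sum>e\<in>X. 1)" by simp
    also have "\<dots> \<le> (\<Sum>e\<in>X. edge_k W e - 1)"
      by (rule sum_mono) (auto simp: X_def excess_edge_def)
    also have "\<dots> \<le> (\<Sum>e\<in>?E. edge_k W e - 1)"
      by (rule sum_mono2[OF fE]) (auto simp: X_def)
    finally show ?thesis unfolding walk_excess_def .
  qed
  have xpos: "card X \<ge> 1"
  proof -
    have "(\<Sum>e\<in>?E. edge_k W e - 1) \<noteq> 0" using xi unfolding walk_excess_def by simp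
    then have "\<not> (\<forall>e\<in>?E. edge_k W e - 1 = 0)" by (metis (no_types, lifting) sum.neutral)
    then obtain e where "e \<in> ?E" "edge_k W e - 1 \<noteq> 0" by blast
    then have "e \<in> X" unfolding X_def excess_edge_def by auto
    then show ?thesis using fE card_ge1[of X e] unfolding X_def by auto
  qed
  have E2: "\<forall>e\<in>?E. e \<subseteq> ?V \<and> card e = 2"
    using tw_edge[OF tw] by fastforce
  have rV: "?r \<in> ?V" using Wne setW by (metis hd_in_set)
  define d where "d v = vdeg W v" for v
  have d_def': "d v = card {e\<in>?E. v \<in> e}" for v unfolding d_def vdeg_def by simp
  define xv where "xv v = card {e\<in>X. v \<in> e}" for v
  have dpos: "d v \<ge> 1" if v: "v \<in> ?V" for v
  proof -
    obtain j where j: "j < length W" "W ! j = v" using v setW by (metis in_set_conv_nth)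
    have "step_edge W j \<in> {e\<in>?E. v \<in> e}" using j step_edge_in[OF j(1)] unfolding step_edge_def by auto
    moreover have "finite {e\<in>?E. v \<in> e}" using fE by auto
    ultimately show ?thesis unfolding d_def' using card_ge1 by metis
  qed
  have xv1: "xv v \<ge> 1" if "e \<in> ?E" "v \<in> e" "excess_edge W e" for v e
  proof -
    have i: "e \<in> {e\<in>X. v \<in> e}" using that unfolding X_def by auto
    have f: "finite {e\<in>X. v \<in> e}" using fE unfolding X_def by auto
    show ?thesis unfolding xv_def using card_ge1[OF f i] .
  qed
  have exv: "\<exists>e. e \<in> ?E \<and> v \<in> e" if "v \<in> ?V" for v
  proof -
    have "card {e\<in>?E. v \<in> e} \<noteq> 0" using dpos[OF that] unfolding d_def' by simp
    then show ?thesis by (metis (no_types, lifting) card.empty empty_Collect_eq)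
  qed
  have K1: "\<forall>v\<in>?V. v \<noteq> ?r \<and> vdeg W v = 1 \<longrightarrow> (\<forall>e\<in>?E. v \<in> e \<longrightarrow> \<not> simple_edge W e)"
   and K2: "vdeg W ?r = 1 \<longrightarrow> (\<forall>e\<in>?E. ?r \<in> e \<longrightarrow> excess_edge W e)"
   and K3: "\<forall>v\<in>?V. v \<noteq> ?r \<and> vdeg W v = 2 \<longrightarrow> \<not> (\<forall>e\<in>?E. v \<in> e \<longrightarrow> simple_edge W e)"
    using kw unfolding kernel_walk_def by auto
  have pv: "1 \<le> int (d v) - 2 + int (xv v) + (if d v = 1 then 1 else 0) + (if v = ?r then 1 else 0)"
    if v: "v \<in> ?V" for v
  proof -
    consider "d v = 1" | "d v = 2" | "d v \<ge> 3" using dpos[OF v] by linarith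
    then show ?thesis
    proof cases
      case 1
      obtain e where e: "e \<in> ?E" "v \<in> e" using exv[OF v] by blast
      have "excess_edge W e"
      proof (cases "v = ?r")
        case True then show ?thesis using K2 1 e unfolding d_def by auto
      next
        case False then show ?thesis using K1 1 e v nse unfolding d_def by auto
      qed
      then have "xv v \<ge> 1" using xv1 e by blast
      then show ?thesis using 1 by simp
    next
      case 2
      show ?thesis
      proof (cases "v = ?r")
        case True then show ?thesis using 2 by simp
      next
        case False
        then obtain e where e: "e \<in> ?E" "v \<in> e" "\<not> simple_edge W e"
          using K3 2 v unfolding d_def by auto
        then have "xv v \<ge> 1" using xv1 nse by blast
        then show ?thesis using 2 by simp
      qed
    next
      case 3
      have "(0::int) \<le> (if d v = 1 then 1 else 0) + (if v = ?r then 1 else 0)" by simp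
      then show ?thesis using 3 by linarith
    qed
  qed
  have sd: "(\<Sum>v\<in>?V. d v) = 2 * card ?E"
    unfolding d_def' by (rule deg_sum[OF _ fE E2]) simp
  have sxv: "(\<Sum>v\<in>?V. xv v) = 2 * card X"
    unfolding xv_def by (rule deg_sum) (use fE E2 in \<open>auto simp: X_def\<close>)
  define Lv where "Lv = {v\<in>?V. d v = 1}"
  have m2: "m \<ge> 2" using cE Wne step_edge_in[of 0 W] card_ge1[OF fE] by fastforce
  show ?thesis
  proof (cases "m = 2")
    case True
    then show ?thesis using xle xpos cSX cE ns by simp
  next
    case False
    then have m3: "m \<ge> 3" using m2 by simp
    define g where "g v = (THE e. e \<in> ?E \<and> v \<in> e)" for v
    have gprop: "g v \<in> ?E \<and> v \<in> g v \<and> (\<forall>e\<in>?E. v \<in> e \<longrightarrow> e = g v)" if v: "v \<in> Lv" for v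
    proof -
      have "card {e\<in>?E. v \<in> e} = 1" using v unfolding Lv_def d_def' by simp
      then obtain e0 where e0: "{e\<in>?E. v \<in> e} = {e0}" using card_1_singletonE by blast
      then have "\<exists>!e. e \<in> ?E \<and> v \<in> e" by (metis (mono_tags, lifting) mem_Collect_eq singleton_iff)
      then have gv: "g v \<in> ?E \<and> v \<in> g v" unfolding g_def by (rule theI')
      have eq: "e = e0" if "e \<in> ?E" "v \<in> e" for e
      proof -
        have "e \<in> {e\<in>?E. v \<in> e}" using that by simp
        then show ?thesis unfolding e0 by simp
      qed
      show ?thesis using gv eq[of "g v"] eq by metis
    qed
    have gX: "g v \<in> X" if v: "v \<in> Lv" for v
    proof -
      have vV: "v \<in> ?V" and dv: "vdeg W v = 1" using v unfolding Lv_def d_def by auto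
      have "excess_edge W (g v)"
      proof (cases "v = ?r")
        case True then show ?thesis using K2 dv gprop[OF v] by auto
      next
        case False then show ?thesis using K1 dv vV gprop[OF v] nse by auto
      qed
      then show ?thesis using gprop[OF v] unfolding X_def by auto
    qed
    have ginj: "inj_on g Lv"
    proof (rule inj_onI, rule ccontr)
      fix v w assume v: "v \<in> Lv" and w: "w \<in> Lv" and gvw: "g v = g w" and vw: "v \<noteq> w"
      have gvE: "g v \<in> ?E" "v \<in> g v" using gprop[OF v] by auto
      have wgv: "w \<in> g v" using gprop[OF w] gvw by simp
      obtain a b where ab: "g v = {a, b}" using tw_edge[OF tw gvE(1)] by blast
      have e: "g v = {v, w}" using ab gvE(2) wgv vw by fastforce
      have vV: "v \<in> ?V" using v unfolding Lv_def by auto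
      have clos: "c \<in> {v, w}" if "(v, c) \<in> (adj ?E)\<^sup>*" for c
        using that
      proof (induction rule: rtrancl_induct)
        case base then show ?case by simp
      next
        case (step y z)
        have yz: "{y, z} \<in> ?E" using step(2) unfolding adj_def by auto
        have "y \<in> Lv" using step(3) v w by auto
        then have "{y, z} = g y" using gprop yz by blast
        moreover have "g y = {v, w}" using step(3) e gvw by auto
        ultimately show ?case by auto
      qed
      have "?V \<subseteq> {v, w}" using clos tw_conn[OF tw vV] by blast
      then have "card ?V \<le> card {v, w}" by (intro card_mono) auto
      also have "\<dots> \<le> 2" by (simp add: card_insert_if)
      finally show False using m3 by simp
    qed
    have cL: "card Lv \<le> card X"
      by (rule card_inj_on_le[OF ginj]) (use gX fE in \<open>auto simp: X_def\<close>)
    have "int m = (\<Sum>v\<in>?V. 1::int)" by simp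
    also have "\<dots> \<le> (\<Sum>v\<in>?V. int (d v) - 2 + int (xv v) + (if d v = 1 then 1 else 0) + (if v = ?r then 1 else 0))"
      by (rule sum_mono) (use pv in blast)
    also have "\<dots> = int (\<Sum>v\<in>?V. d v) - 2 * int m + int (\<Sum>v\<in>?V. xv v)
        + (\<Sum>v\<in>?V. if d v = 1 then 1 else 0) + (\<Sum>v\<in>?V. if v = ?r then 1 else 0)"
      by (simp add: sum.distrib sum_subtractf)
    also have "(\<Sum>v\<in>?V. if d v = 1 then 1 else 0) = int (card Lv)"
      unfolding Lv_def by (rule card_filter_int[symmetric]) simp
    also have "(\<Sum>v\<in>?V. if v = ?r then 1 else (0::int)) = 1" using rV by simp
    finally have "int m \<le> int (\<Sum>v\<in>?V. d v) - 2 * int m + int (\<Sum>v\<in>?V. xv v) + int (card Lv) + 1" .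
    then have "int m \<le> int (2 * card ?E) - 2 * int m + int (2 * card X) + int (card Lv) + 1"
      by (simp only: sd sxv)
    then have "m + 1 \<le> 3 * card X" using cE cL by linarith
    then show ?thesis using xle cSX cE ns by simp
  qed
qed

lemma reach_walk:
  assumes "j < length W"
  shows "(W ! 0, W ! j) \<in> (adj (walk_edges W))\<^sup>*"
  using assms
proof (induction j)
  case 0 then show ?case by simp
next
  case (Suc j)
  have j: "j < length W" using Suc.prems by simp
  have "step_edge W j = {W ! j, W ! Suc j}"
    unfolding step_edge_def using Suc.prems by simp
  then have "(W ! j, W ! Suc j) \<in> adj (walk_edges W)"
    using step_edge_in[OF j] unfolding adj_def by auto
  then show ?case using Suc.IH[OF j] by (meson rtrancl_into_rtrancl)
qed

lemma tw_intro:
  assumes ne: "W \<noteq> []" and sW: "set W = {1..m}"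
    and nd: "\<forall>j < length W. W ! j \<noteq> W ! ((j+1) mod length W)"
    and cE: "card (walk_edges W) + 1 \<le> m"
  shows "tree_walk m W"
proof -
  let ?E = "walk_edges W"
  let ?V = "{1..m}"
  have W0: "W ! 0 \<in> ?V" using ne sW nth_mem[of 0 W] by simp
  have conn0: "(W ! 0, v) \<in> (adj ?E)\<^sup>*" if "v \<in> ?V" for v
  proof -
    have "v \<in> set W" using that sW by simp
    then obtain j where j: "j < length W" "W ! j = v" unfolding in_set_conv_nth by blast
    show ?thesis using reach_walk[OF j(1)] j(2) by simp
  qed
  have conn: "\<forall>a\<in>?V. \<forall>b\<in>?V. (a, b) \<in> (adj ?E)\<^sup>*"
    using conn0 adj_sym_rtrancl by (meson rtrancl_trans)
  have edges: "\<forall>e\<in>?E. \<exists>a b. a \<in> ?V \<and> b \<in> ?V \<and> a \<noteq> b \<and> e = {a, b}"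
  proof
    fix e assume "e \<in> ?E"
    then obtain j where j: "j < length W" "e = step_edge W j" unfolding walk_edges_def by auto
    have "(j+1) mod length W < length W" using ne by (intro mod_less_divisor) simp
    then have "W ! ((j+1) mod length W) \<in> ?V" using sW nth_mem by blast
    moreover have "W ! j \<in> ?V" using j(1) sW nth_mem by blast
    ultimately show "\<exists>a b. a \<in> ?V \<and> b \<in> ?V \<and> a \<noteq> b \<and> e = {a, b}"
      using nd j unfolding step_edge_def by blast
  qed
  have "card ?V \<le> card ?E + 1"
    by (rule conn_card[OF _ finite_walk_edges W0]) (use conn0 in auto)
  then have "card ?E + 1 = card ?V" using cE by simp
  moreover have "?V \<noteq> {}" using W0 by auto
  ultimately show ?thesis unfolding tree_walk_def is_tree_def using ne sW conn edges by auto
qed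

lemma exc_intro:
  assumes tw: "tree_walk m W" and j: "j1 < j2" "j2 < j3" "j3 < length W"
    and e: "step_edge W j1 = e" "step_edge W j2 = e" "step_edge W j3 = e"
  shows "excess_edge W e"
proof -
  have eE: "e \<in> walk_edges W" using e(1) step_edge_in[of j1 W] j by simp
  have "{j1, j2, j3} \<subseteq> {j. j < length W \<and> step_edge W j = e}" using j e by auto
  then have "card {j1, j2, j3} \<le> trav W e" unfolding trav_def by (intro card_mono) auto
  moreover have "card {j1, j2, j3} = 3" using j by auto
  ultimately have "trav W e \<ge> 3" by simp
  moreover have "2 * edge_k W e = trav W e" using edge_k_props(1)[OF tw eE] .
  ultimately show ?thesis unfolding excess_edge_def by linarith
qed

lemma deg_intro:
  assumes j: "j1 < length W" "j2 < length W"
    and v: "v \<in> step_edge W j1" "v \<in> step_edge W j2"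
    and d: "step_edge W j1 \<noteq> step_edge W j2"
  shows "vdeg W v \<ge> 2"
proof -
  have "{step_edge W j1, step_edge W j2} \<subseteq> {e \<in> walk_edges W. v \<in> e}"
    using j v step_edge_in by auto
  then have "card {step_edge W j1, step_edge W j2} \<le> vdeg W v"
    unfolding vdeg_def by (intro card_mono) (auto simp: finite_walk_edges)
  then show ?thesis using d by simp
qed

lemma deg3_intro:
  assumes j: "j1 < length W" "j2 < length W" "j3 < length W"
    and v: "v \<in> step_edge W j1" "v \<in> step_edge W j2" "v \<in> step_edge W j3"
    and d: "step_edge W j1 \<noteq> step_edge W j2" "step_edge W j1 \<noteq> step_edge W j3"
           "step_edge W j2 \<noteq> step_edge W j3"
  shows "vdeg W v \<ge> 3"
proof -
  have "{step_edge W j1, step_edge W j2, step_edge W j3} \<subseteq> {e \<in> walk_edges W. v \<in> e}"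
    using j v step_edge_in by auto
  then have "card {step_edge W j1, step_edge W j2, step_edge W j3} \<le> vdeg W v"
    unfolding vdeg_def by (intro card_mono) (auto simp: finite_walk_edges)
  then show ?thesis using d by simp
qed

lemma kw_intro:
  assumes tw: "tree_walk m W"
    and vc: "\<forall>v\<in>{1..m}. vdeg W v \<ge> 3 \<or> (\<exists>e\<in>walk_edges W. v \<in> e \<and> excess_edge W e)
                 \<or> (v = hd W \<and> vdeg W v \<ge> 2)"
  shows "kernel_walk m W"
proof -
  let ?E = "walk_edges W"
  have one: "excess_edge W e" if v: "v \<in> {1..m}" "vdeg W v = 1" "e \<in> ?E" "v \<in> e"
    and ex: "\<exists>e\<in>?E. v \<in> e \<and> excess_edge W e" for v e
  proof -
    obtain e0 where e0: "e0 \<in> ?E" "v \<in> e0" "excess_edge W e0" using ex by blast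
    have "card {e \<in> ?E. v \<in> e} = 1" using v unfolding vdeg_def by simp
    then obtain x where x: "{e \<in> ?E. v \<in> e} = {x}" using card_1_singletonE by blast
    have "e0 \<in> {x}" "e \<in> {x}" using x e0 v by blast+
    then show ?thesis using e0 by simp
  qed
  have c1: "\<forall>v\<in>{1..m}. v \<noteq> hd W \<and> vdeg W v = 1 \<longrightarrow>
           (\<forall>e\<in>?E. v \<in> e \<longrightarrow> \<not> simple_edge W e)"
  proof (intro ballI impI allI)
    fix v e assume v: "v \<in> {1..m}" "v \<noteq> hd W \<and> vdeg W v = 1" and e: "e \<in> ?E" "v \<in> e"
    have "\<exists>e\<in>?E. v \<in> e \<and> excess_edge W e" using vc v by fastforce
    then have "excess_edge W e" using one v e by blast
    then show "\<not> simple_edge W e" unfolding excess_edge_def simple_edge_def by simp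
  qed
  have hdV: "hd W \<in> {1..m}" using tw unfolding tree_walk_def by (metis hd_in_set)
  have c2: "vdeg W (hd W) = 1 \<longrightarrow> (\<forall>e\<in>?E. hd W \<in> e \<longrightarrow> excess_edge W e)"
  proof (intro impI ballI)
    fix e assume d: "vdeg W (hd W) = 1" and e: "e \<in> ?E" "hd W \<in> e"
    have "\<exists>e\<in>?E. hd W \<in> e \<and> excess_edge W e" using vc hdV d by fastforce
    then show "excess_edge W e" using one hdV d e by blast
  qed
  have c3: "\<forall>v\<in>{1..m}. v \<noteq> hd W \<and> vdeg W v = 2 \<longrightarrow>
           \<not> (\<forall>e\<in>?E. v \<in> e \<longrightarrow> simple_edge W e)"
  proof (intro ballI impI)
    fix v assume v: "v \<in> {1..m}" "v \<noteq> hd W \<and> vdeg W v = 2"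
    then obtain e where "e \<in> ?E" "v \<in> e" "excess_edge W e" using vc by fastforce
    then show "\<not> (\<forall>e\<in>?E. v \<in> e \<longrightarrow> simple_edge W e)"
      unfolding excess_edge_def simple_edge_def by auto
  qed
  show ?thesis unfolding kernel_walk_def by (intro conjI tw c1 c2 c3)
qed

definition blk :: "nat \<Rightarrow> nat" where
  "blk r = (if r = 0 \<or> r = 6 then 1 else if r = 2 \<or> r = 4 then 3 else 2)"

definition wfn :: "nat \<Rightarrow> nat \<Rightarrow> nat" where
  "wfn q j = (if j < 7*q then 3*(j div 7) + blk (j mod 7)
             else if j < 7*q+5 then (if even (j - 7*q) then 3*q+1 else 3*q+2)
             else 3*(q - 1 - (j - 7*q - 5)) + 1)"

definition wW :: "nat \<Rightarrow> nat list" where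
  "wW q = map (wfn q) [0..<8*q+4]"

definition SS :: "nat \<Rightarrow> nat set set" where
  "SS q = (\<lambda>i. {3*i+1, 3*i+2}) ` {..q} \<union> (\<lambda>i. {3*i+2, 3*i+3}) ` {..<q}
          \<union> (\<lambda>i. {3*i+1, 3*i+4}) ` {..<q}"

lemma wf_blk: "i < q \<Longrightarrow> r < 7 \<Longrightarrow> wfn q (7*i + r) = 3*i + blk r"
  unfolding wfn_def by auto

lemma wf_mid: "t < 5 \<Longrightarrow> wfn q (7*q + t) = (if even t then 3*q+1 else 3*q+2)"
  unfolding wfn_def by simp

lemma wf_tail: "t + 1 < q \<Longrightarrow> wfn q (7*q + 5 + t) = 3*(q - 1 - t) + 1"
  unfolding wfn_def by simp

lemma wf0: "wfn q 0 = 1"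
  unfolding wfn_def blk_def by auto

lemma wf_next6: "i < q \<Longrightarrow> wfn q (7*i + 7) = 3*i + 4"
proof -
  assume i: "i < q"
  show ?thesis
  proof (cases "i + 1 < q")
    case True
    have e: "7*i + 7 = 7*(i+1) + 0" by simp
    have "wfn q (7*i+7) = wfn q (7*(i+1)+0)" by (simp only: e)
    also have "\<dots> = 3*(i+1) + blk 0" by (rule wf_blk) (use True in auto)
    finally show ?thesis by (simp add: blk_def)
  next
    case False
    then have q: "q = i + 1" using i by simp
    have "wfn q (7*q + 0) = 3*q+1" using wf_mid[of 0 q] by simp
    then show ?thesis using q by (simp add: ac_simps)
  qed
qed

lemma S1: "i \<le> q \<Longrightarrow> {3*i+1, 3*i+2} \<in> SS q" unfolding SS_def by blast
lemma S1': "i \<le> q \<Longrightarrow> {3*i+2, 3*i+1} \<in> SS q" using S1 by (simp add: insert_commute)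
lemma S2: "i < q \<Longrightarrow> {3*i+2, 3*i+3} \<in> SS q" unfolding SS_def by blast
lemma S2': "i < q \<Longrightarrow> {3*i+3, 3*i+2} \<in> SS q" using S2 by (simp add: insert_commute)
lemma S3: "i < q \<Longrightarrow> {3*i+1, 3*i+4} \<in> SS q" unfolding SS_def by blast
lemma S3': "i < q \<Longrightarrow> {3*i+4, 3*i+1} \<in> SS q" using S3 by (simp add: insert_commute)

lemma SS_card2: "e \<in> SS q \<Longrightarrow> card e = 2"
  unfolding SS_def by auto

lemma S_neq: "{a, b} \<in> SS q \<Longrightarrow> a \<noteq> b"
  using SS_card2[of "{a, b}" q] by (cases "a = b") auto

lemma card_SS: "card (SS q) \<le> 3*q+1"
proof -
  have "card (SS q) \<le> card ((\<lambda>i. {3*i+1, 3*i+2}) ` {..q}) + card ((\<lambda>i. {3*i+2, 3*i+3}) ` {..<q})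
          + card ((\<lambda>i. {3*i+1, 3*i+4}) ` {..<q})"
    unfolding SS_def by (meson add_mono card_Un_le le_trans order_refl)
  also have "\<dots> \<le> card {..q} + card {..<q} + card {..<q}"
    by (intro add_mono card_image_le) auto
  finally show ?thesis by simp
qed

lemma step_fam:
  assumes jL: "j < 8*q+4"
  shows "{wfn q j, wfn q ((j+1) mod (8*q+4))} \<in> SS q"
proof -
  let ?L = "8*q+4"
  consider (A) "j < 7*q" | (B) "7*q \<le> j" "j < 7*q+5" | (C) "7*q+5 \<le> j" by linarith
  then show ?thesis
  proof cases
    case A
    define i where "i = j div 7"
    define r where "r = j mod 7"
    have j: "j = 7*i + r" and r7: "r < 7" unfolding i_def r_def by auto
    have iq: "i < q" using A j by linarith
    have wj: "wfn q j = 3*i + blk r" using wf_blk[OF iq r7] j by simp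
    show ?thesis
    proof (cases "r < 6")
      case True
      have m: "(j+1) mod ?L = 7*i + (r+1)" using j A True by simp
      have wj1: "wfn q (7*i + (r+1)) = 3*i + blk (r+1)" by (rule wf_blk[OF iq]) (use True in simp)
      have "r = 0 \<or> r = 1 \<or> r = 2 \<or> r = 3 \<or> r = 4 \<or> r = 5" using True by linarith
      moreover have "i \<le> q" using iq by simp
      ultimately show ?thesis using iq S1[of i q] S2[of i q] S1'[of i q] S2'[of i q] unfolding m wj wj1
        by (elim disjE) (simp_all add: blk_def)
    next
      case False
      then have r6: "r = 6" using r7 by simp
      have m: "(j+1) mod ?L = 7*i + 7" using j A r6 by simp
      show ?thesis unfolding m wj wf_next6[OF iq] using r6 S3[OF iq] by (simp add: blk_def)
    qed
  next
    case B
    define t where "t = j - 7*q"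
    have j: "j = 7*q + t" and t5: "t < 5" using B unfolding t_def by auto
    have wj: "wfn q j = (if even t then 3*q+1 else 3*q+2)" using wf_mid[OF t5] j by simp
    show ?thesis
    proof (cases "t < 4")
      case True
      show ?thesis
      proof (cases "j + 1 < ?L")
        case True2: True
        have m: "(j+1) mod ?L = 7*q + (t+1)" using j True2 by simp
        have wj1: "wfn q (7*q + (t+1)) = (if even (t+1) then 3*q+1 else 3*q+2)"
          by (rule wf_mid) (use True in simp)
        show ?thesis unfolding m wj wj1 using S1[of q q] S1'[of q q] by auto
      next
        case False
        then have jL1: "j + 1 = ?L" using jL by simp
        then have q0: "q = 0" and t3: "t = 3" using j True by auto
        have m: "(j+1) mod ?L = 0" by (simp only: jL1 mod_self)
        show ?thesis unfolding m wj wf0 using q0 t3 S1'[of 0 0] by simp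
      qed
    next
      case False
      then have t4: "t = 4" using t5 by simp
      have q1: "q \<ge> 1" using jL j t4 by simp
      show ?thesis
      proof (cases "q \<ge> 2")
        case True
        have m: "(j+1) mod ?L = 7*q + 5 + 0" using j t4 True by simp
        have wt: "wfn q (7*q + 5 + 0) = 3*(q-1) + 1" using wf_tail[of 0 q] True by simp
        have X0: "{3*(q-1)+4, 3*(q-1)+1} \<in> SS q" by (rule S3') (use q1 in simp)
        have e: "3*(q-1)+4 = 3*q+1" using q1 by simp
        have X: "{3*q+1, 3*(q-1)+1} \<in> SS q" using X0 unfolding e .
        show ?thesis unfolding m wj wt using t4 X by simp
      next
        case False
        then have q1': "q = 1" using q1 by simp
        have m: "(j+1) mod ?L = 0" using j t4 q1' by simp
        show ?thesis unfolding m wj wf0 using t4 q1' S3'[of 0 1] by simp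
      qed
    qed
  next
    case C
    define t where "t = j - 7*q - 5"
    have j: "j = 7*q + 5 + t" using C unfolding t_def by simp
    have tq: "t + 1 < q" using j jL by simp
    have wj: "wfn q j = 3*(q-1-t) + 1" using wf_tail[OF tq] j by simp
    show ?thesis
    proof (cases "j + 1 < ?L")
      case True
      have tq2: "t + 2 < q" using True j by simp
      have m: "(j+1) mod ?L = 7*q + 5 + (t+1)" using True j by simp
      have wj1: "wfn q (7*q + 5 + (t+1)) = 3*(q-2-t) + 1" using wf_tail[of "t+1" q] tq2 by simp
      have X0: "{3*(q-2-t)+4, 3*(q-2-t)+1} \<in> SS q" by (rule S3') (use tq2 in simp)
      have e: "3*(q-2-t)+4 = 3*(q-1-t)+1" using tq2 by simp
      have X: "{3*(q-1-t)+1, 3*(q-2-t)+1} \<in> SS q" using X0 unfolding e .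
      show ?thesis unfolding m wj wj1 using X .
    next
      case False
      then have jL1: "j + 1 = ?L" using jL by simp
      then have t2: "t = q - 2" and q2: "q \<ge> 2" using j tq by auto
      have m: "(j+1) mod ?L = 0" by (simp only: jL1 mod_self)
      have "3*(q-1-t)+1 = 4" using t2 q2 by simp
      then show ?thesis unfolding m wj wf0 using S3'[of 0 q] q2 by simp
    qed
  qed
qed

lemma len_wW: "length (wW q) = 8*q+4" unfolding wW_def by simp

lemma nth_wW: "j < 8*q+4 \<Longrightarrow> wW q ! j = wfn q j" unfolding wW_def by simp

lemma se_wW: "j < 8*q+4 \<Longrightarrow> step_edge (wW q) j = {wfn q j, wfn q ((j+1) mod (8*q+4))}"
proof -
  assume j: "j < 8*q+4"
  have "(j+1) mod (8*q+4) < 8*q+4" by simp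
  then show ?thesis unfolding step_edge_def len_wW using nth_wW j by simp
qed

lemma se_wW': "j + 1 < 8*q+4 \<Longrightarrow> step_edge (wW q) j = {wfn q j, wfn q (j+1)}"
  using se_wW[of j q] by simp

lemma edges_wW: "walk_edges (wW q) \<subseteq> SS q"
  unfolding walk_edges_def using se_wW step_fam len_wW by auto

lemma finite_SS: "finite (SS q)" unfolding SS_def by simp

lemma card_E_wW: "card (walk_edges (wW q)) \<le> 3*q+1"
  using card_mono[OF finite_SS edges_wW] card_SS le_trans by blast

lemma nodup_wW: "\<forall>j < length (wW q). wW q ! j \<noteq> wW q ! ((j+1) mod length (wW q))"
proof (intro allI impI)
  fix j assume j: "j < length (wW q)"
  then have j': "j < 8*q+4" using len_wW by simp
  have "(j+1) mod (8*q+4) < 8*q+4" by simp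
  then have "wW q ! ((j+1) mod (8*q+4)) = wfn q ((j+1) mod (8*q+4))" using nth_wW by blast
  then show "wW q ! j \<noteq> wW q ! ((j+1) mod length (wW q))"
    using S_neq[OF step_fam[OF j']] nth_wW[OF j'] len_wW by simp
qed

lemma blk_range: "r < 7 \<Longrightarrow> 1 \<le> blk r \<and> blk r \<le> 3" unfolding blk_def by simp

lemma range_wf: "j < 8*q+4 \<Longrightarrow> 1 \<le> wfn q j \<and> wfn q j \<le> 3*q+2"
proof -
  assume jL: "j < 8*q+4"
  consider (A) "j < 7*q" | (B) "7*q \<le> j" "j < 7*q+5" | (C) "7*q+5 \<le> j" by linarith
  then show ?thesis
  proof cases
    case A
    define i where "i = j div 7"
    define r where "r = j mod 7"
    have j: "j = 7*i + r" and r7: "r < 7" unfolding i_def r_def by auto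
    have iq: "i < q" using A j by linarith
    have wj: "wfn q j = 3*i + blk r" using wf_blk[OF iq r7] j by simp
    have "3*i + 3 \<le> 3*q" using iq by simp
    then show ?thesis using wj blk_range[OF r7] by linarith
  next
    case B
    define t where "t = j - 7*q"
    have j: "j = 7*q + t" and t5: "t < 5" using B unfolding t_def by auto
    show ?thesis using wf_mid[OF t5] j by simp
  next
    case C
    define t where "t = j - 7*q - 5"
    have j: "j = 7*q + 5 + t" using C unfolding t_def by simp
    have tq: "t + 1 < q" using j jL by simp
    show ?thesis using wf_tail[OF tq] j by simp
  qed
qed

lemma vdecomp:
  fixes v q :: nat
  assumes "1 \<le> v" "v \<le> 3*q"
  obtains i r where "i < q" "r < 3" "v = 3*i + r + 1"
proof -
  define i where "i = (v - 1) div 3"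
  define r where "r = (v - 1) mod 3"
  have "v - 1 = 3*i + r" unfolding i_def r_def by simp
  then have v: "v = 3*i + r + 1" using assms by simp
  have "r < 3" unfolding r_def by simp
  moreover have "i < q" using v assms by linarith
  ultimately show ?thesis using that v by blast
qed

lemma blk_small: "r < 3 \<Longrightarrow> blk r = r + 1" unfolding blk_def by auto

lemma set_wW: "set (wW q) = {1..3*q+2}"
proof
  show "set (wW q) \<subseteq> {1..3*q+2}"
    unfolding wW_def using range_wf by auto
next
  show "{1..3*q+2} \<subseteq> set (wW q)"
  proof
    fix v assume v: "v \<in> {1..3*q+2}"
    have img: "set (wW q) = wfn q ` {..<8*q+4}" unfolding wW_def by auto
    show "v \<in> set (wW q)"
    proof (cases "v \<le> 3*q")
      case True
      obtain i r where ir: "i < q" "r < 3" "v = 3*i + r + 1" using vdecomp[of v q] v True by auto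
      have "wfn q (7*i + r) = v" using wf_blk[OF ir(1), of r] ir blk_small by simp
      moreover have "7*i + r < 8*q+4" using ir by simp
      ultimately show ?thesis unfolding img by (metis image_eqI lessThan_iff)
    next
      case False
      then have "v = 3*q+1 \<or> v = 3*q+2" using v by auto
      moreover have "wfn q (7*q + 0) = 3*q+1" "wfn q (7*q+1) = 3*q+2" using wf_mid[of 0 q] wf_mid[of 1 q] by simp_all
      moreover have "7*q + 0 < 8*q+4" "7*q+1 < 8*q+4" by simp_all
      ultimately show ?thesis unfolding img by (metis image_eqI lessThan_iff)
    qed
  qed
qed

lemma tw_wW: "tree_walk (3*q+2) (wW q)"
proof (rule tw_intro)
  show "wW q \<noteq> []" using len_wW[of q] by auto
  show "set (wW q) = {1..3*q+2}" by (rule set_wW)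
  show "\<forall>j < length (wW q). wW q ! j \<noteq> wW q ! ((j+1) mod length (wW q))" by (rule nodup_wW)
  show "card (walk_edges (wW q)) + 1 \<le> 3*q+2" using card_E_wW[of q] by simp
qed

lemma excess_wW: "walk_excess (wW q) = q + 1"
proof -
  have "length (wW q) = 2 * (walk_excess (wW q) + card (walk_edges (wW q)))"
    by (rule excess_len[OF tw_wW])
  moreover have "card (walk_edges (wW q)) + 1 = 3*q+2" by (rule tw_card[OF tw_wW])
  ultimately show ?thesis using len_wW[of q] by simp
qed

lemma se_at: "j + 1 < 8*q+4 \<Longrightarrow> wfn q j = a \<Longrightarrow> wfn q (j+1) = b \<Longrightarrow> step_edge (wW q) j = {a, b}"
  using se_wW' by simp

lemma excA:
  assumes iq: "i < q"
  shows "{3*i+2, 3*i+3} \<in> walk_edges (wW q) \<and> excess_edge (wW q) {3*i+2, 3*i+3}"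
proof -
  have v1: "wfn q (7*i+1) = 3*i+2" using wf_blk[OF iq, of 1] by (simp add: blk_def)
  have v2: "wfn q (7*i+2) = 3*i+3" using wf_blk[OF iq, of 2] by (simp add: blk_def)
  have v3: "wfn q (7*i+3) = 3*i+2" using wf_blk[OF iq, of 3] by (simp add: blk_def)
  have v4: "wfn q (7*i+4) = 3*i+3" using wf_blk[OF iq, of 4] by (simp add: blk_def)
  have L: "7*i+4 < 8*q+4" using iq by simp
  have e1: "step_edge (wW q) (7*i+1) = {3*i+2, 3*i+3}"
    by (rule se_at) (use L v1 v2 in \<open>simp_all add: numeral_eq_Suc\<close>)
  have e2: "step_edge (wW q) (7*i+2) = {3*i+2, 3*i+3}"
    using se_at[of "7*i+2" q "3*i+3" "3*i+2"] L v2 v3 by (simp add: insert_commute numeral_eq_Suc)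
  have e3: "step_edge (wW q) (7*i+3) = {3*i+2, 3*i+3}"
    by (rule se_at) (use L v3 v4 in \<open>simp_all add: numeral_eq_Suc\<close>)
  have ex: "excess_edge (wW q) {3*i+2, 3*i+3}"
    by (rule exc_intro[OF tw_wW, of "7*i+1" "7*i+2" "7*i+3"]) (use L e1 e2 e3 len_wW in auto)
  have "{3*i+2, 3*i+3} \<in> walk_edges (wW q)" using step_edge_in[of "7*i+1" "wW q"] e1 L len_wW by simp
  then show ?thesis using ex by simp
qed

lemma excB: "{3*q+1, 3*q+2} \<in> walk_edges (wW q) \<and> excess_edge (wW q) {3*q+1, 3*q+2}"
proof -
  have v: "wfn q (7*q+t) = (if even t then 3*q+1 else 3*q+2)" if "t < 5" for t
    using wf_mid that by simp
  have v0: "wfn q (7*q) = 3*q+1" using v[of 0] by simp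
  have v1: "wfn q (7*q+1) = 3*q+2" using v[of 1] by simp
  have v2: "wfn q (7*q+2) = 3*q+1" using v[of 2] by simp
  have v3: "wfn q (7*q+3) = 3*q+2" using v[of 3] by simp
  have e1: "step_edge (wW q) (7*q) = {3*q+1, 3*q+2}"
    by (rule se_at) (use v0 v1 in \<open>simp_all add: numeral_eq_Suc\<close>)
  have e2: "step_edge (wW q) (7*q+1) = {3*q+1, 3*q+2}"
    using se_at[of "7*q+1" q "3*q+2" "3*q+1"] v1 v2 by (simp add: insert_commute numeral_eq_Suc)
  have e3: "step_edge (wW q) (7*q+2) = {3*q+1, 3*q+2}"
    by (rule se_at) (use v2 v3 in \<open>simp_all add: numeral_eq_Suc\<close>)
  have ex: "excess_edge (wW q) {3*q+1, 3*q+2}"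
    by (rule exc_intro[OF tw_wW, of "7*q" "7*q+1" "7*q+2"]) (use e1 e2 e3 len_wW in auto)
  have "{3*q+1, 3*q+2} \<in> walk_edges (wW q)" using step_edge_in[of "7*q" "wW q"] e1 len_wW by simp
  then show ?thesis using ex by simp
qed

lemma degC:
  assumes iq: "i < q" and i1: "i \<ge> 1"
  shows "vdeg (wW q) (3*i+1) \<ge> 3"
proof -
  have a0: "wfn q (7*i) = 3*i+1" using wf_blk[OF iq, of 0] by (simp add: blk_def)
  have a1: "wfn q (7*i+1) = 3*i+2" using wf_blk[OF iq, of 1] by (simp add: blk_def)
  have a6: "wfn q (7*i+6) = 3*i+1" using wf_blk[OF iq, of 6] by (simp add: blk_def)
  have a7: "wfn q (7*i+6+1) = 3*i+4" using wf_next6[OF iq] by (simp add: ac_simps)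
  have iq': "i - 1 < q" using iq by simp
  have k: "7*(i-1)+6 = 7*i - 1" "7*i - 1 + 1 = 7*i" using i1 by simp_all
  have b6: "wfn q (7*i - 1) = 3*(i-1)+1" using wf_blk[OF iq', of 6] k by (simp add: blk_def)
  have b7: "wfn q (7*i - 1 + 1) = 3*i+1" using a0 k by simp
  have L: "7*i+6+1 < 8*q+4" using iq by simp
  have e1: "step_edge (wW q) (7*i) = {3*i+1, 3*i+2}"
    by (rule se_at) (use L a0 a1 in simp_all)
  have e2: "step_edge (wW q) (7*i+6) = {3*i+1, 3*i+4}"
    by (rule se_at) (use L a6 a7 in simp_all)
  have e3: "step_edge (wW q) (7*i - 1) = {3*(i-1)+1, 3*i+1}"
    by (rule se_at) (use L b6 b7 in simp_all)
  have n: "3*(i-1)+1 \<noteq> 3*i+1" "3*(i-1)+1 \<noteq> 3*i+2" "3*(i-1)+1 \<noteq> 3*i+4" using i1 by simp_all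
  show ?thesis
    by (rule deg3_intro[of "7*i" _ "7*i+6" "7*i - 1"]) (use L len_wW e1 e2 e3 n in \<open>auto simp: doubleton_eq_iff\<close>)
qed

lemma degD:
  assumes q1: "q \<ge> 1"
  shows "vdeg (wW q) 1 \<ge> 2"
proof -
  have iq: "0 < q" using q1 by simp
  have a0: "wfn q 0 = 1" by (rule wf0)
  have a1: "wfn q (0+1) = 2" using wf_blk[OF iq, of 1] by (simp add: blk_def)
  have a6: "wfn q 6 = 1" using wf_blk[OF iq, of 6] by (simp add: blk_def)
  have a7: "wfn q (6+1) = 4" using wf_next6[OF iq] by simp
  have L: "6+1 < 8*q+4" using q1 by simp
  have e1: "step_edge (wW q) 0 = {1, 2}"
    by (rule se_at) (use L a0 a1 in simp_all)
  have e2: "step_edge (wW q) 6 = {1, 4}"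
    by (rule se_at) (use L a6 a7 in simp_all)
  show ?thesis
    by (rule deg_intro[of 0 _ 6]) (use L len_wW e1 e2 in auto)
qed

lemma hd_wW: "hd (wW q) = 1"
proof -
  have "wW q \<noteq> []" using len_wW[of q] by auto
  then have "hd (wW q) = wW q ! 0" by (simp add: hd_conv_nth)
  then show ?thesis using nth_wW[of 0 q] wf0 by simp
qed

lemma kw_wW: "kernel_walk (3*q+2) (wW q)"
proof (rule kw_intro[OF tw_wW], intro ballI)
  fix v assume v: "v \<in> {1..3*q+2}"
  let ?E = "walk_edges (wW q)"
  show "vdeg (wW q) v \<ge> 3 \<or> (\<exists>e\<in>?E. v \<in> e \<and> excess_edge (wW q) e)
                 \<or> (v = hd (wW q) \<and> vdeg (wW q) v \<ge> 2)"
  proof (cases "v \<le> 3*q")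
    case True
    obtain i r where ir: "i < q" "r < 3" "v = 3*i + r + 1" using vdecomp[of v q] v True by auto
    consider "r = 0" "i = 0" | "r = 0" "i \<ge> 1" | "r = 1" | "r = 2" using ir by linarith
    then show ?thesis
    proof cases
      case 1
      then show ?thesis using degD[of q] ir hd_wW by simp
    next
      case 2
      then show ?thesis using degC[OF ir(1)] ir by simp
    next
      case 3
      then show ?thesis using excA[OF ir(1)] ir by auto
    next
      case 4
      then show ?thesis using excA[OF ir(1)] ir by auto
    qed
  next
    case False
    then have "v = 3*q+1 \<or> v = 3*q+2" using v by auto
    then show ?thesis using excB[of q] by auto
  qed
qed

lemma witness: "\<xi> \<ge> 1 \<Longrightarrow> \<exists>m W. kernel_walk m W \<and> walk_excess W = \<xi> \<and> m = 3 * \<xi> - 1"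
proof -
  assume x: "\<xi> \<ge> 1"
  define q where "q = \<xi> - 1"
  have "kernel_walk (3*q+2) (wW q)" "walk_excess (wW q) = \<xi>" "3*q+2 = 3*\<xi> - 1"
    using kw_wW[of q] excess_wW[of q] x unfolding q_def by auto
  then show ?thesis by blast
qed


lemma kw_tw: "kernel_walk m W \<Longrightarrow> tree_walk m W" unfolding kernel_walk_def by simp

lemma kw_len: "kernel_walk m W \<Longrightarrow> length W = 2 * (walk_excess W + m - 1) \<and> m \<ge> 1"
  using excess_len[OF kw_tw] tw_card[OF kw_tw] by fastforce

lemma kw_bounds:
  assumes "kernel_walk m W" "walk_excess W = \<xi>" "\<xi> \<ge> 1"
  shows "m \<le> 3 * \<xi> - 1" "num_simple W \<le> 2 * \<xi> - 2"
    "m = 3 * \<xi> - 1 \<Longrightarrow> num_simple W = 2 * \<xi> - 2"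
  using kernel_bound[OF assms(1)] assms(2,3) by auto

lemma kcount_finite: "finite {W. (\<exists>m. kernel_walk m W) \<and> length W = 2 * l
                          \<and> walk_excess W = \<xi> \<and> num_simple W = s}"
proof (rule finite_subset[OF _ finite_lists_length_eq[of "{0..2*l}" "2*l"]])
  show "{W. (\<exists>m. kernel_walk m W) \<and> length W = 2 * l \<and> walk_excess W = \<xi> \<and> num_simple W = s}
        \<subseteq> {xs. set xs \<subseteq> {0..2*l} \<and> length xs = 2*l}"
  proof clarify
    fix W m x assume kw: "kernel_walk m W" and len: "length W = 2 * l" and x: "x \<in> set W"
    have sW: "set W = {1..m}" using kw unfolding kernel_walk_def tree_walk_def by simp
    have "m = card (set W)" using sW by simp
    also have "\<dots> \<le> length W" by (rule card_length)
    finally have "m \<le> 2 * l" using len by simp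
    then show "x \<in> {0..2*l}" using x sW by auto
  qed
qed simp

lemma supp_D:
  assumes "(s, j, l) \<in> K_support \<xi>"
  shows "\<exists>m W. kernel_walk m W \<and> walk_excess W = \<xi> \<and> num_simple W = s \<and> j = m \<and> l = \<xi> + m - 1"
proof -
  have nz: "K_coeff \<xi> s j l \<noteq> 0" using assms unfolding K_support_def by simp
  have c1: "j + \<xi> = l + 1" using nz unfolding K_coeff_def by (cases "j + \<xi> = l + 1") simp_all
  have c2: "kcount \<xi> s l \<noteq> 0" using nz unfolding K_coeff_def by (cases "j + \<xi> = l + 1") simp_all
  have "{W. (\<exists>m. kernel_walk m W) \<and> length W = 2 * l \<and> walk_excess W = \<xi> \<and> num_simple W = s} \<noteq> {}"
    using c2 unfolding kcount_def by (metis card.empty)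
  then obtain W where "W \<in> {W. (\<exists>m. kernel_walk m W) \<and> length W = 2 * l \<and> walk_excess W = \<xi> \<and> num_simple W = s}"
    by blast
  then obtain m where W: "kernel_walk m W" "length W = 2 * l" "walk_excess W = \<xi>" "num_simple W = s"
    by blast
  then show ?thesis using kw_len[OF W(1)] c1 by (intro exI[of _ m] exI[of _ W]) auto
qed

lemma supp_I:
  assumes "kernel_walk m W" "walk_excess W = \<xi>" "num_simple W = s"
  shows "(s, m, \<xi> + m - 1) \<in> K_support \<xi>"
proof -
  have len: "length W = 2 * (\<xi> + m - 1)" "m \<ge> 1" using kw_len[OF assms(1)] assms(2) by auto
  have "W \<in> {W. (\<exists>m. kernel_walk m W) \<and> length W = 2 * (\<xi> + m - 1)
                          \<and> walk_excess W = \<xi> \<and> num_simple W = s}" using assms len by auto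
  then have "kcount \<xi> s (\<xi> + m - 1) \<noteq> 0" unfolding kcount_def
    using kcount_finite[of "\<xi> + m - 1" \<xi> s] card_0_eq by blast
  then show ?thesis unfolding K_support_def K_coeff_def using len by auto
qed

theorem lemma2:
  fixes \<xi> :: nat
  assumes "\<xi> \<ge> 1"
  shows "(\<forall>m W. kernel_walk m W \<and> walk_excess W = \<xi> \<longrightarrow>
            card {1..m} \<le> 3 * \<xi> - 1 \<and> num_simple W \<le> 2 * \<xi> - 2)
       \<and> (\<exists>m W. kernel_walk m W \<and> walk_excess W = \<xi> \<and> card {1..m} = 3 * \<xi> - 1)
       \<and> (\<exists>m W. kernel_walk m W \<and> walk_excess W = \<xi> \<and> num_simple W = 2 * \<xi> - 2)
       \<and> finite (K_support \<xi>)
       \<and> Max ((\<lambda>(s, j, l). s) ` K_support \<xi>) = 2 * \<xi> - 2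
       \<and> Max ((\<lambda>(s, j, l). j) ` K_support \<xi>) = 3 * \<xi> - 1
       \<and> Max ((\<lambda>(s, j, l). l) ` K_support \<xi>) = 4 * \<xi> - 2"
proof -
  obtain m0 W0 where W0: "kernel_walk m0 W0" "walk_excess W0 = \<xi>" "m0 = 3 * \<xi> - 1"
    using witness[OF assms] by blast
  have s0: "num_simple W0 = 2 * \<xi> - 2" using kw_bounds(3)[OF W0(1,2) assms W0(3)] .
  have P1: "\<forall>m W. kernel_walk m W \<and> walk_excess W = \<xi> \<longrightarrow>
            card {1..m} \<le> 3 * \<xi> - 1 \<and> num_simple W \<le> 2 * \<xi> - 2"
  proof (intro allI impI)
    fix m W assume a: "kernel_walk m W \<and> walk_excess W = \<xi>"
    show "card {1..m} \<le> 3 * \<xi> - 1 \<and> num_simple W \<le> 2 * \<xi> - 2"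
      using kw_bounds(1,2)[OF conjunct1[OF a] conjunct2[OF a] assms] by simp
  qed
  have inS: "(2 * \<xi> - 2, 3 * \<xi> - 1, 4 * \<xi> - 2) \<in> K_support \<xi>"
  proof -
    have "\<xi> + m0 - 1 = 4 * \<xi> - 2" using W0(3) assms by linarith
    then show ?thesis using supp_I[OF W0(1,2) s0] W0(3) by simp
  qed
  have bnd: "s \<le> 2 * \<xi> - 2 \<and> j \<le> 3 * \<xi> - 1 \<and> l \<le> 4 * \<xi> - 2" if asm: "(s, j, l) \<in> K_support \<xi>" for s j l
  proof -
    obtain m W where W: "kernel_walk m W" "walk_excess W = \<xi>" "num_simple W = s" "j = m" "l = \<xi> + m - 1"
      using supp_D[OF asm] by blast
    show ?thesis using kw_bounds[OF W(1,2) assms] W(3-5) assms by auto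
  qed
  have fin: "finite (K_support \<xi>)"
  proof (rule finite_subset)
    show "K_support \<xi> \<subseteq> {..2 * \<xi> - 2} \<times> {..3 * \<xi> - 1} \<times> {..4 * \<xi> - 2}"
      using bnd by auto
  qed simp
  have M1: "Max ((\<lambda>(s, j, l). s) ` K_support \<xi>) = 2 * \<xi> - 2"
  proof (rule Max_eqI)
    show "finite ((\<lambda>(s, j, l). s) ` K_support \<xi>)" using fin by simp
    show "y \<le> 2 * \<xi> - 2" if "y \<in> (\<lambda>(s, j, l). s) ` K_support \<xi>" for y
      using that bnd by auto
    show "2 * \<xi> - 2 \<in> (\<lambda>(s, j, l). s) ` K_support \<xi>"
      by (rule rev_image_eqI[OF inS]) simp
  qed
  have M2: "Max ((\<lambda>(s, j, l). j) ` K_support \<xi>) = 3 * \<xi> - 1"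
  proof (rule Max_eqI)
    show "finite ((\<lambda>(s, j, l). j) ` K_support \<xi>)" using fin by simp
    show "y \<le> 3 * \<xi> - 1" if "y \<in> (\<lambda>(s, j, l). j) ` K_support \<xi>" for y
      using that bnd by auto
    show "3 * \<xi> - 1 \<in> (\<lambda>(s, j, l). j) ` K_support \<xi>"
      by (rule rev_image_eqI[OF inS]) simp
  qed
  have M3: "Max ((\<lambda>(s, j, l). l) ` K_support \<xi>) = 4 * \<xi> - 2"
  proof (rule Max_eqI)
    show "finite ((\<lambda>(s, j, l). l) ` K_support \<xi>)" using fin by simp
    show "y \<le> 4 * \<xi> - 2" if "y \<in> (\<lambda>(s, j, l). l) ` K_support \<xi>" for y
      using that bnd by auto
    show "4 * \<xi> - 2 \<in> (\<lambda>(s, j, l). l) ` K_support \<xi>"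
      by (rule rev_image_eqI[OF inS]) simp
  qed
  have E1: "\<exists>m W. kernel_walk m W \<and> walk_excess W = \<xi> \<and> card {1..m} = 3 * \<xi> - 1"
    using W0 by (intro exI[of _ m0] exI[of _ W0]) simp
  have E2: "\<exists>m W. kernel_walk m W \<and> walk_excess W = \<xi> \<and> num_simple W = 2 * \<xi> - 2"
    using W0 s0 by (intro exI[of _ m0] exI[of _ W0]) simp
  show ?thesis by (rule conjI[OF P1 conjI[OF E1 conjI[OF E2 conjI[OF fin conjI[OF M1 conjI[OF M2 M3]]]]]])
qed

end
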